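(* Let $\beta\in(0,1/2^{|S|})$ and $\varepsilon\in\left(0,\frac{\beta(1-\beta)}{L\,|S|^{4}}\right)$. For every irreducible transition matrix $q$ on $S$ and every transition matrix $\widehat q$ on $S$ that is $(\varepsilon,\beta)$-close to $q$: (1) $\widehat q$ is irreducible; (2) its stationary distribution $\widehat\mu$ satisfies $\left|1-\frac{\widehat\mu_s}{\mu_s}\right|\le 18\beta L$ for every $s\in S$.
   Context: $S$ is a finite set with $|S|\ge 2$. A transition matrix on $S$ is $q=(q(t\mid s))_{s,t\in S}$ with nonnegative entries and $\sum_{t}q(t\mid s)=1$ for each $s$; for $D\subseteq S$ write $q(D\mid s)=\sum_{t\in D}q(t\mid s)$, and for $C\subseteq S$ write $\overline C=S\setminus C$. For irreducible $q$, $\mu=(\mu_s)_{s\in S}$ denotes its stationary distribution. Define $\zeta_q=\min_{\emptyset\neq C\subsetneq S}\sum_{s\in C}\mu_s\,q(\overline C\mid s)$. Given $\varepsilon,\beta>0$, a transition matrix $\widehat q$ is $(\varepsilon,\beta)$-close to $q$ if for all $s,t\in S$, $\left|1-\frac{\widehat q(t\mid s)}{q(t\mid s)}\right|\le\beta$ whenever (a) $\mu_s q(t\mid s)\ge\varepsilon\zeta_q$ or (b) $\mu_s\widehat q(t\mid s)\ge\varepsilon\zeta_q$ (in case (b) this requires in particular $q(t\mid s)>0$). Finally $L=\sum_{n=1}^{|S|-1}\binom{|S|}{n}n^{|S|}$. *)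

theory Defs
  imports Complex_Main "HOL-Library.Cardinality"
begin

text \<open>The finite state space S is a finite type 's. A transition matrix is
  q :: 's => 's => real, where q s t stands for q(t | s).\<close>

definition transition_matrix :: "('s::finite \<Rightarrow> 's \<Rightarrow> real) \<Rightarrow> bool" where
  "transition_matrix q \<longleftrightarrow> (\<forall>s t. 0 \<le> q s t) \<and> (\<forall>s. (\<Sum>t\<in>UNIV. q s t) = 1)"

definition irreducible :: "('s::finite \<Rightarrow> 's \<Rightarrow> real) \<Rightarrow> bool" where
  "irreducible q \<longleftrightarrow> transition_matrix q \<and>
     (\<forall>s t. (s, t) \<in> {(x, y). 0 < q x y}\<^sup>*)"

definition stationary_dist :: "('s::finite \<Rightarrow> 's \<Rightarrow> real) \<Rightarrow> ('s \<Rightarrow> real) \<Rightarrow> bool" where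
  "stationary_dist q \<mu> \<longleftrightarrow> (\<forall>s. 0 \<le> \<mu> s) \<and> (\<Sum>s\<in>UNIV. \<mu> s) = 1 \<and>
     (\<forall>t. (\<Sum>s\<in>UNIV. \<mu> s * q s t) = \<mu> t)"

definition trans_prob_set :: "('s::finite \<Rightarrow> 's \<Rightarrow> real) \<Rightarrow> 's set \<Rightarrow> 's \<Rightarrow> real" where
  "trans_prob_set q D s = (\<Sum>t\<in>D. q s t)"

definition zeta :: "('s::finite \<Rightarrow> 's \<Rightarrow> real) \<Rightarrow> ('s \<Rightarrow> real) \<Rightarrow> real" where
  "zeta q \<mu> = Min {(\<Sum>s\<in>C. \<mu> s * trans_prob_set q (UNIV - C) s) | C. C \<noteq> {} \<and> C \<noteq> UNIV}"

definition close :: "real \<Rightarrow> real \<Rightarrow> ('s::finite \<Rightarrow> 's \<Rightarrow> real) \<Rightarrow> ('s \<Rightarrow> real)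
     \<Rightarrow> ('s \<Rightarrow> 's \<Rightarrow> real) \<Rightarrow> bool" where
  "close \<epsilon> \<beta> q \<mu> qh \<longleftrightarrow> (\<forall>s t.
      (\<mu> s * q s t \<ge> \<epsilon> * zeta q \<mu> \<or> \<mu> s * qh s t \<ge> \<epsilon> * zeta q \<mu>) \<longrightarrow>
        (0 < q s t \<and> \<bar>1 - qh s t / q s t\<bar> \<le> \<beta>))"

definition L_const :: "nat \<Rightarrow> real" where
  "L_const N = (\<Sum>n=1..N-1. real (N choose n) * real n ^ N)"

end

theory Submission
  imports Defs
begin

definition cutflow :: "('s::finite \<Rightarrow> real) \<Rightarrow> ('s \<Rightarrow> 's \<Rightarrow> real) \<Rightarrow> 's set \<Rightarrow> real" where
  "cutflow w qq C = (\<Sum>u\<in>C. \<Sum>t\<in>UNIV-C. w u * qq u t)"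

definition inflow :: "('s::finite \<Rightarrow> real) \<Rightarrow> ('s \<Rightarrow> 's \<Rightarrow> real) \<Rightarrow> 's set \<Rightarrow> real" where
  "inflow w qq C = (\<Sum>u\<in>UNIV-C. \<Sum>t\<in>C. w u * qq u t)"

lemma balance:
  fixes qq :: "'s::finite \<Rightarrow> 's \<Rightarrow> real"
  assumes "transition_matrix qq" "stationary_dist qq w"
  shows "cutflow w qq C = inflow w qq C"
proof -
  have row: "(\<Sum>t\<in>C. qq u t) + (\<Sum>t\<in>UNIV-C. qq u t) = 1" for u
  proof -
    have "(\<Sum>t\<in>UNIV. qq u t) = (\<Sum>t\<in>UNIV-C. qq u t) + (\<Sum>t\<in>C. qq u t)"
      by (rule sum.subset_diff) auto
    then show ?thesis using assms(1) unfolding transition_matrix_def by simp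
  qed
  have "(\<Sum>t\<in>C. w t) = (\<Sum>t\<in>C. \<Sum>u\<in>UNIV. w u * qq u t)"
    using assms(2) unfolding stationary_dist_def by simp
  also have "\<dots> = (\<Sum>u\<in>UNIV. \<Sum>t\<in>C. w u * qq u t)" by (rule sum.swap)
  also have "\<dots> = (\<Sum>u\<in>UNIV-C. \<Sum>t\<in>C. w u * qq u t) + (\<Sum>u\<in>C. \<Sum>t\<in>C. w u * qq u t)"
    by (rule sum.subset_diff) auto
  finally have 1: "(\<Sum>t\<in>C. w t) = inflow w qq C + (\<Sum>u\<in>C. \<Sum>t\<in>C. w u * qq u t)"
    unfolding inflow_def .
  have "(\<Sum>t\<in>C. w t) = (\<Sum>u\<in>C. w u * ((\<Sum>t\<in>C. qq u t) + (\<Sum>t\<in>UNIV-C. qq u t)))"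
    using row by simp
  also have "\<dots> = (\<Sum>u\<in>C. \<Sum>t\<in>C. w u * qq u t) + cutflow w qq C"
    unfolding cutflow_def by (simp add: distrib_left sum_distrib_left sum.distrib)
  finally show ?thesis using 1 by simp
qed

lemma mu_pos:
  fixes q :: "'s::finite \<Rightarrow> 's \<Rightarrow> real"
  assumes irr: "irreducible q" and mu: "stationary_dist q \<mu>"
  shows "\<mu> s > 0"
proof (rule ccontr)
  assume "\<not> \<mu> s > 0"
  moreover have "0 \<le> \<mu> s" using mu unfolding stationary_dist_def by simp
  ultimately have z: "\<mu> s = 0" by simp
  have "\<mu> x = 0" if "(x, s) \<in> {(x, y). 0 < q x y}\<^sup>*" for x
    using that
  proof (induction rule: converse_rtrancl_induct)
    case base then show ?case using z by simp
  next
    case (step x y)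
    have "(\<Sum>z\<in>UNIV. \<mu> z * q z y) = 0" using mu step unfolding stationary_dist_def by simp
    moreover have "\<forall>z\<in>UNIV. 0 \<le> \<mu> z * q z y"
      using mu irr unfolding stationary_dist_def irreducible_def transition_matrix_def by simp
    ultimately have "\<mu> x * q x y = 0" using sum_nonneg_eq_0_iff[of UNIV "\<lambda>z. \<mu> z * q z y"] by simp
    then show ?case using step by simp
  qed
  then have "\<forall>x. \<mu> x = 0" using irr unfolding irreducible_def by blast
  then show False using mu unfolding stationary_dist_def by simp
qed

lemma cross_edge:
  assumes "(s, t) \<in> R\<^sup>*" "s \<in> C" "t \<notin> C"
  shows "\<exists>x\<in>C. \<exists>y. y \<notin> C \<and> (x, y) \<in> R"
  using assms
proof (induction rule: rtrancl_induct)
  case base then show ?case by simp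
next
  case (step y z)
  then show ?case by (cases "y \<in> C") auto
qed

lemma zeta_le:
  fixes q :: "'s::finite \<Rightarrow> 's \<Rightarrow> real"
  assumes "C \<noteq> {}" "C \<noteq> UNIV"
  shows "zeta q \<mu> \<le> cutflow \<mu> q C"
proof -
  have "cutflow \<mu> q C = (\<Sum>s\<in>C. \<mu> s * trans_prob_set q (UNIV - C) s)"
    unfolding cutflow_def trans_prob_set_def by (simp add: sum_distrib_left)
  moreover have "finite {(\<Sum>s\<in>C. \<mu> s * trans_prob_set q (UNIV - C) s) | C. C \<noteq> {} \<and> C \<noteq> UNIV}"
    by simp
  ultimately show ?thesis unfolding zeta_def using assms by (auto intro!: Min_le)
qed

lemma zeta_pos:
  fixes q :: "'s::finite \<Rightarrow> 's \<Rightarrow> real"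
  assumes card: "CARD('s) \<ge> 2" and irr: "irreducible q" and mu: "stationary_dist q \<mu>"
  shows "zeta q \<mu> > 0"
proof -
  have pos: "cutflow \<mu> q C > 0" if CC: "C \<noteq> {}" "C \<noteq> UNIV" for C
  proof -
    obtain s t where "s \<in> C" "t \<notin> C" using CC by blast
    then obtain x y where xy: "x \<in> C" "y \<notin> C" "0 < q x y"
      using cross_edge[of s t "{(x, y). 0 < q x y}" C] irr unfolding irreducible_def by blast
    have nn: "0 \<le> \<mu> u * q u t" for u t
      using mu irr unfolding stationary_dist_def irreducible_def transition_matrix_def by simp
    have inner: "0 < (\<Sum>t\<in>UNIV-C. \<mu> x * q x t)"
      by (rule sum_pos2[where i=y]) (simp_all add: xy mu_pos[OF irr mu] nn)
    show ?thesis unfolding cutflow_def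
      by (rule sum_pos2[where i=x]) (simp_all add: xy inner sum_nonneg nn)
  qed
  have eq: "(\<Sum>s\<in>C. \<mu> s * trans_prob_set q (UNIV - C) s) = cutflow \<mu> q C" for C
    unfolding cutflow_def trans_prob_set_def by (simp add: sum_distrib_left)
  have "\<not> CARD('s) \<le> Suc 0" using card by simp
  then obtain a b :: 's where "a \<noteq> b" by (auto simp: card_le_Suc0_iff_eq)
  then have ne: "{a} \<noteq> UNIV" by auto
  let ?A = "{cutflow \<mu> q C | C. C \<noteq> {} \<and> C \<noteq> UNIV}"
  have A1: "?A \<noteq> {}" using ne by blast
  have A2: "finite ?A" by simp
  have "\<forall>x\<in>?A. 0 < x" using pos by blast
  then have "0 < Min ?A" using A1 A2 by simp
  then show ?thesis unfolding zeta_def eq .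
qed

lemma pow_bound:
  fixes x :: real
  assumes "0 \<le> x" "x \<le> 1 \<or> n \<le> 1"
  shows "(1 + x) ^ n \<le> 1 + x * (2 ^ n - 1)"
  using assms
proof (induction n)
  case 0 then show ?case by simp
next
  case (Suc n)
  show ?case
  proof (cases "n = 0")
    case True then show ?thesis by simp
  next
    case False
    then have x1: "x \<le> 1" using Suc.prems by auto
    have IH: "(1 + x) ^ n \<le> 1 + x * (2 ^ n - 1)" using Suc.IH Suc.prems x1 by auto
    have p: "(1::real) \<le> 2 ^ n" by simp
    have "(1 + x) ^ Suc n = (1 + x) * (1 + x) ^ n" by simp
    also have "\<dots> \<le> (1 + x) * (1 + x * (2 ^ n - 1))"
      using IH Suc.prems by (intro mult_left_mono) auto
    also have "\<dots> \<le> 1 + x * (2 ^ Suc n - 1)"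
    proof -
      have "x * x * (2 ^ n - 1) \<le> x * (2 ^ n - 1)"
        using x1 p Suc.prems by (intro mult_right_mono) (auto simp: mult_left_le)
      then show ?thesis by (simp add: algebra_simps)
    qed
    finally show ?thesis .
  qed
qed

lemma L_lower:
  assumes "N \<ge> 2"
  shows "real N * real (N - 1) ^ N \<le> L_const N"
proof -
  have "real (N choose (N - 1)) * real (N - 1) ^ N \<le> (\<Sum>n=1..N-1. real (N choose n) * real n ^ N)"
    by (rule member_le_sum) (use assms in auto)
  moreover have "N choose (N - 1) = N"
    using assms binomial_symmetric[of 1 N] by simp
  ultimately show ?thesis unfolding L_const_def by simp
qed

lemma L_big:
  assumes "N \<ge> 2"
  shows "4 * 2 ^ N \<le> 18 * L_const N"
proof (cases "N = 2")
  case True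
  then show ?thesis using L_lower[OF assms] by simp
next
  case False
  then have "2 \<le> real (N - 1)" using assms by auto
  then have "(2::real) ^ N \<le> real (N - 1) ^ N" by (rule power_mono) simp
  moreover have "(1::real) \<le> real N" using assms by simp
  ultimately have "(2::real) ^ N \<le> real N * real (N - 1) ^ N"
    using mult_mono[of 1 "real N" "2 ^ N" "real (N - 1) ^ N"] by simp
  then have "(2::real) ^ N \<le> L_const N" using L_lower[OF assms] by (rule order_trans)
  moreover have "(0::real) \<le> 2 ^ N" by simp
  ultimately show ?thesis by linarith
qed

lemma chain:
  fixes r :: "'s::finite \<Rightarrow> real"
  assumes rho: "1 \<le> \<rho>" and rnn: "\<And>u. 0 \<le> r u"
    and cut: "\<And>C. C \<noteq> {} \<Longrightarrow> C \<noteq> UNIV \<Longrightarrow> \<exists>u\<in>C. \<exists>t. t \<notin> C \<and> r u \<le> \<rho> * r t"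
  shows "r s \<le> \<rho> ^ (CARD('s) - 1) * r t"
proof -
  define D where "D k = {u. r s \<le> \<rho> ^ k * r u}" for k
  have mono: "D k \<subseteq> D (Suc k)" for k
  proof
    fix u assume "u \<in> D k"
    then have "r s \<le> \<rho> ^ k * r u" by (simp add: D_def)
    also have "\<dots> \<le> \<rho> ^ Suc k * r u"
      using rho rnn[of u] by (intro mult_right_mono) (auto simp: power_increasing)
    finally show "u \<in> D (Suc k)" by (simp add: D_def)
  qed
  have grow: "k < CARD('s) \<Longrightarrow> k + 1 \<le> card (D k)" for k
  proof (induction k)
    case 0
    have "s \<in> D 0" by (simp add: D_def)
    then show ?case by (simp add: Suc_le_eq card_gt_0_iff) blast
  next
    case (Suc k)
    show ?case
    proof (cases "D k = UNIV")
      case True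
      then have "D (Suc k) = UNIV" using mono[of k] by auto
      then show ?thesis using Suc.prems by simp
    next
      case False
      have "D k \<noteq> {}" using Suc.IH Suc.prems by auto
      then obtain u t' where u: "u \<in> D k" "t' \<notin> D k" "r u \<le> \<rho> * r t'"
        using cut[OF _ False] by blast
      have "r s \<le> \<rho> ^ k * r u" using u by (simp add: D_def)
      also have "\<dots> \<le> \<rho> ^ k * (\<rho> * r t')" using u rho by (intro mult_left_mono) auto
      finally have "t' \<in> D (Suc k)" by (simp add: D_def algebra_simps)
      then have "insert t' (D k) \<subseteq> D (Suc k)" using mono[of k] by auto
      then have "card (insert t' (D k)) \<le> card (D (Suc k))" by (intro card_mono) auto
      then show ?thesis using u Suc.IH Suc.prems by simp
    qed
  qed
  have "CARD('s) \<le> card (D (CARD('s) - 1))"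
    using grow[of "CARD('s) - 1"] by simp
  then have "D (CARD('s) - 1) = UNIV"
    using card_seteq[of UNIV "D (CARD('s) - 1)"] by simp
  then show ?thesis by (auto simp: D_def)
qed


lemma key:
  fixes \<beta> \<delta> F z :: real
  assumes "0 < \<beta>" "\<beta> \<le> 1/4" "0 \<le> \<delta>" "\<delta> \<le> \<beta>" "0 < z" "z \<le> F"
  shows "(1 + \<beta>) * F + \<delta> * z \<le> (1 + 8*\<beta>) * ((1 - \<beta>) * (F - \<delta> * z))"
proof -
  obtain g where g: "F = z + g" "0 \<le> g" using assms by (metis add.commute diff_add_cancel diff_ge_0_iff_ge)
  have "6*\<beta> - 8*\<beta>^2 = \<beta> * (6 - 8*\<beta>)" by (simp add: algebra_simps power2_eq_square)
  moreover have "0 \<le> \<beta> * (6 - 8*\<beta>)" using assms by (intro mult_nonneg_nonneg) auto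
  ultimately have c1: "0 \<le> (6*\<beta> - 8*\<beta>^2) * g" using g by simp
  have c2: "0 \<le> (1 + 8*\<beta>) * (1 - \<beta>) * (1 - \<delta>) - (1 + \<beta>) - \<delta>"
  proof -
    have "(1 + 8*\<beta>) * (1 - \<beta>) * (1 - \<beta>) \<le> (1 + 8*\<beta>) * (1 - \<beta>) * (1 - \<delta>)"
      using assms by (intro mult_left_mono) auto
    moreover have "0 \<le> (1 + 8*\<beta>) * (1 - \<beta>) * (1 - \<beta>) - 1 - 2*\<beta>"
    proof -
      have "(1 + 8*\<beta>) * (1 - \<beta>) * (1 - \<beta>) - 1 - 2*\<beta> = \<beta> * (4 - 15*\<beta> + 8*\<beta>^2)"
        by (simp add: algebra_simps power2_eq_square)
      moreover have "0 \<le> 4 - 15*\<beta> + 8*\<beta>^2" using assms by (simp add: power2_eq_square)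
      ultimately show ?thesis using assms by simp
    qed
    ultimately show ?thesis using assms by linarith
  qed
  have "(1 + 8*\<beta>) * ((1 - \<beta>) * (F - \<delta> * z)) - ((1 + \<beta>) * F + \<delta> * z)
     = (6*\<beta> - 8*\<beta>^2) * g + ((1 + 8*\<beta>) * (1 - \<beta>) * (1 - \<delta>) - (1 + \<beta>) - \<delta>) * z"
    using g by (simp add: algebra_simps power2_eq_square)
  moreover have "0 \<le> ((1 + 8*\<beta>) * (1 - \<beta>) * (1 - \<delta>) - (1 + \<beta>) - \<delta>) * z" using c2 assms by simp
  ultimately show ?thesis using c1 by linarith
qed

theorem theorem1:
  fixes \<beta> \<epsilon> :: real
    and q qh :: "'s::finite \<Rightarrow> 's \<Rightarrow> real"
    and \<mu> :: "'s \<Rightarrow> real"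
  assumes card: "CARD('s) \<ge> 2"
    and beta: "0 < \<beta>" "\<beta> < 1 / 2 ^ CARD('s)"
    and eps: "0 < \<epsilon>" "\<epsilon> < \<beta> * (1 - \<beta>) / (L_const CARD('s) * real CARD('s) ^ 4)"
    and irr: "irreducible q"
    and mu: "stationary_dist q \<mu>"
    and tm: "transition_matrix qh"
    and cl: "close \<epsilon> \<beta> q \<mu> qh"
  shows "irreducible qh \<and>
    (\<forall>\<mu>h. stationary_dist qh \<mu>h \<longrightarrow>
       (\<forall>s. \<bar>1 - \<mu>h s / \<mu> s\<bar> \<le> 18 * \<beta> * L_const CARD('s)))"
proof -
  define N where "N = CARD('s)"
  define L where "L = L_const N"
  define z where "z = zeta q \<mu>"
  define \<delta> where "\<delta> = real N ^ 2 * \<epsilon>"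
  have N2: "N \<ge> 2" using card N_def by simp
  have zpos: "0 < z" unfolding z_def by (rule zeta_pos[OF card irr mu])
  have mpos: "\<And>u. 0 < \<mu> u" by (rule mu_pos[OF irr mu])
  have qnn: "\<And>u t. 0 \<le> q u t" using irr unfolding irreducible_def transition_matrix_def by simp
  have qhnn: "\<And>u t. 0 \<le> qh u t" using tm unfolding transition_matrix_def by simp
  have "(4::real) \<le> 2 ^ N"
    using power_increasing[of 2 N "2::real"] N2 by simp
  then have "1 / 2 ^ N \<le> (1::real) / 4" by (intro divide_left_mono) auto
  then have b14: "\<beta> \<le> 1/4" using beta(2)[folded N_def] by linarith
  have L1: "1 \<le> L"
  proof -
    have "(1::real) \<le> real (N - 1) ^ N" using N2 by (intro one_le_power) auto
    moreover have "(1::real) \<le> real N" using N2 by simp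
    ultimately have "1 \<le> real N * real (N - 1) ^ N"
      using mult_mono[of 1 "real N" 1 "real (N - 1) ^ N"] by simp
    then show ?thesis using L_lower[OF N2] L_def by simp
  qed
  have dnn: "0 \<le> \<delta>" using eps \<delta>_def by simp
  have dle: "\<delta> \<le> \<beta>"
  proof -
    have pos: "0 < L * real N ^ 4" using L1 N2 by simp
    have "\<epsilon> * (L * real N ^ 4) < \<beta> * (1 - \<beta>)"
      using eps(2) pos unfolding L_def N_def by (simp add: pos_less_divide_eq)
    moreover have "\<beta> * (1 - \<beta>) \<le> \<beta>" using beta by (simp add: algebra_simps)
    moreover have "real N ^ 2 \<le> L * real N ^ 4"
    proof -
      have "real N ^ 2 \<le> real N ^ 4" using N2 by (intro power_increasing) auto
      also have "\<dots> \<le> L * real N ^ 4" using L1 mult_right_mono[of 1 L "real N ^ 4"] by simp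
      finally show ?thesis .
    qed
    then have "\<epsilon> * real N ^ 2 \<le> \<epsilon> * (L * real N ^ 4)" using eps by (intro mult_left_mono) auto
    ultimately have "\<epsilon> * real N ^ 2 \<le> \<beta>" by linarith
    then show ?thesis unfolding \<delta>_def by (simp add: algebra_simps)
  qed
  have edge: "(1 - \<beta>) * (\<mu> u * q u t - \<epsilon> * z) \<le> \<mu> u * qh u t \<and>
      \<mu> u * qh u t \<le> (1 + \<beta>) * (\<mu> u * q u t) + \<epsilon> * z" for u t
  proof (cases "\<mu> u * q u t \<ge> \<epsilon> * z \<or> \<mu> u * qh u t \<ge> \<epsilon> * z")
    case True
    then have qp: "0 < q u t" and ab: "\<bar>1 - qh u t / q u t\<bar> \<le> \<beta>"
      using cl unfolding close_def z_def by auto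
    have "(1 - \<beta>) * q u t \<le> qh u t \<and> qh u t \<le> (1 + \<beta>) * q u t"
    proof -
      have "1 - \<beta> \<le> qh u t / q u t" "qh u t / q u t \<le> 1 + \<beta>" using ab by auto
      then show ?thesis using qp by (simp add: le_divide_eq divide_le_eq)
    qed
    then have "(1 - \<beta>) * (\<mu> u * q u t) \<le> \<mu> u * qh u t \<and> \<mu> u * qh u t \<le> (1 + \<beta>) * (\<mu> u * q u t)"
      using mpos[of u] by (auto simp: mult.left_commute intro: mult_left_mono)
    moreover have "(1 - \<beta>) * (\<mu> u * q u t - \<epsilon> * z) \<le> (1 - \<beta>) * (\<mu> u * q u t)"
      using b14 eps zpos by (intro mult_left_mono) auto
    moreover have "0 \<le> \<epsilon> * z" using eps zpos by simp
    ultimately show ?thesis by linarith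
  next
    case False
    have "(1 - \<beta>) * (\<mu> u * q u t - \<epsilon> * z) \<le> 0"
      using False b14 by (intro mult_nonneg_nonpos) auto
    moreover have "0 \<le> \<mu> u * qh u t" using mpos[of u] qhnn[of u t] by simp
    moreover have "0 \<le> (1 + \<beta>) * (\<mu> u * q u t)" using mpos[of u] qnn[of u t] beta by simp
    ultimately show ?thesis using False by linarith
  qed
  have cardC: "real (card C * card (UNIV - C)) \<le> real N ^ 2" for C :: "'s set"
  proof -
    have "card C * card (UNIV - C) \<le> N * N" unfolding N_def
      by (intro mult_le_mono card_mono) auto
    then show ?thesis by (simp add: power2_eq_square flip: of_nat_mult)
  qed
  have Flo: "(1 - \<beta>) * (cutflow \<mu> q C - \<delta> * z) \<le> cutflow \<mu> qh C" for C
  proof -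
    have "(\<Sum>u\<in>C. \<Sum>t\<in>UNIV-C. (1 - \<beta>) * (\<mu> u * q u t - \<epsilon> * z)) \<le> cutflow \<mu> qh C"
      unfolding cutflow_def using edge by (intro sum_mono) auto
    moreover have "(\<Sum>u\<in>C. \<Sum>t\<in>UNIV-C. (1 - \<beta>) * (\<mu> u * q u t - \<epsilon> * z))
        = (1 - \<beta>) * (cutflow \<mu> q C - real (card C * card (UNIV - C)) * (\<epsilon> * z))"
    proof -
      have e1: "(\<Sum>u\<in>C. \<Sum>t\<in>UNIV-C. (1 - \<beta>) * (\<mu> u * q u t - \<epsilon> * z))
         = (1 - \<beta>) * (\<Sum>u\<in>C. \<Sum>t\<in>UNIV-C. (\<mu> u * q u t - \<epsilon> * z))"
        by (simp add: sum_distrib_left)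
      have e2: "(\<Sum>u\<in>C. \<Sum>t\<in>UNIV-C. (\<mu> u * q u t - \<epsilon> * z))
         = cutflow \<mu> q C - real (card C * card (UNIV - C)) * (\<epsilon> * z)"
        unfolding cutflow_def by (simp add: sum_subtractf)
      show ?thesis using e1 e2 by simp
    qed
    moreover have "(1 - \<beta>) * (cutflow \<mu> q C - \<delta> * z) \<le>
        (1 - \<beta>) * (cutflow \<mu> q C - real (card C * card (UNIV - C)) * (\<epsilon> * z))"
    proof -
      have "real (card C * card (UNIV - C)) * (\<epsilon> * z) \<le> \<delta> * z"
        using cardC[of C] eps zpos unfolding \<delta>_def
        by (simp add: mult.assoc[symmetric] mult_right_mono)
      then show ?thesis using b14 by (intro mult_left_mono) auto
    qed
    ultimately show ?thesis by linarith
  qed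
  have Fhi: "inflow \<mu> qh C \<le> (1 + \<beta>) * inflow \<mu> q C + \<delta> * z" for C
  proof -
    have "inflow \<mu> qh C \<le> (\<Sum>u\<in>UNIV-C. \<Sum>t\<in>C. (1 + \<beta>) * (\<mu> u * q u t) + \<epsilon> * z)"
      unfolding inflow_def using edge by (intro sum_mono) auto
    moreover have "(\<Sum>u\<in>UNIV-C. \<Sum>t\<in>C. (1 + \<beta>) * (\<mu> u * q u t) + \<epsilon> * z)
        = (1 + \<beta>) * inflow \<mu> q C + real (card C * card (UNIV - C)) * (\<epsilon> * z)"
    proof -
      have e1: "(\<Sum>u\<in>UNIV-C. \<Sum>t\<in>C. (1 + \<beta>) * (\<mu> u * q u t) + \<epsilon> * z)
         = (\<Sum>u\<in>UNIV-C. \<Sum>t\<in>C. (1 + \<beta>) * (\<mu> u * q u t)) + real (card C * card (UNIV - C)) * (\<epsilon> * z)"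
        by (simp add: sum.distrib)
      have e2: "(\<Sum>u\<in>UNIV-C. \<Sum>t\<in>C. (1 + \<beta>) * (\<mu> u * q u t)) = (1 + \<beta>) * inflow \<mu> q C"
        unfolding inflow_def by (simp add: sum_distrib_left)
      show ?thesis using e1 e2 by simp
    qed
    moreover have "real (card C * card (UNIV - C)) * (\<epsilon> * z) \<le> \<delta> * z"
      using cardC[of C] eps zpos unfolding \<delta>_def
      by (simp add: mult.assoc[symmetric] mult_right_mono)
    ultimately show ?thesis by linarith
  qed
  have Fz: "z \<le> cutflow \<mu> q C" if "C \<noteq> {}" "C \<noteq> UNIV" for C
    unfolding z_def using zeta_le that by blast
  have Fopos: "0 < cutflow \<mu> qh C" if "C \<noteq> {}" "C \<noteq> UNIV" for C
  proof -
    have "0 < (1 - \<beta>) * (cutflow \<mu> q C - \<delta> * z)"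
    proof (intro mult_pos_pos)
      have "\<delta> * z < 1 * z" using dle b14 zpos by (intro mult_strict_right_mono) auto
      then show "0 < cutflow \<mu> q C - \<delta> * z" using Fz[OF that] by simp
    qed (use b14 in simp)
    then show ?thesis using Flo[of C] by linarith
  qed
  have irrh: "irreducible qh"
    unfolding irreducible_def
  proof (intro conjI tm allI)
    fix s t
    define C where "C = {u. (s, u) \<in> {(x, y). 0 < qh x y}\<^sup>*}"
    have "C = UNIV"
    proof (rule ccontr)
      assume ne: "C \<noteq> UNIV"
      have "s \<in> C" unfolding C_def by simp
      then have "C \<noteq> {}" by auto
      then have p: "0 < cutflow \<mu> qh C" using Fopos ne by blast
      have "\<exists>u\<in>C. \<exists>t\<in>UNIV-C. 0 < qh u t"
      proof (rule ccontr)
        assume "\<not> ?thesis"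
        then have "\<forall>u\<in>C. \<forall>t\<in>UNIV-C. qh u t = 0" using qhnn by (metis less_eq_real_def)
        then have "cutflow \<mu> qh C = 0" unfolding cutflow_def by simp
        then show False using p by simp
      qed
      then obtain u t' where "u \<in> C" "t' \<notin> C" "0 < qh u t'" by blast
      then show False unfolding C_def by (auto intro: rtrancl_into_rtrancl)
    qed
    then show "(s, t) \<in> {(x, y). 0 < qh x y}\<^sup>*" unfolding C_def by blast
  qed
  define \<rho> where "\<rho> = 1 + 8 * \<beta>"
  define P where "P = \<rho> ^ (N - 1)"
  have rho1: "1 \<le> \<rho>" using beta \<rho>_def by simp
  have P1: "1 \<le> P" unfolding P_def using rho1 by (rule one_le_power)
  have Pb: "P - 1 \<le> 18 * \<beta> * L"
  proof -
    have c: "8 * \<beta> \<le> 1 \<or> N - 1 \<le> 1"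
    proof (cases "N \<le> 2")
      case False
      then have "(8::real) \<le> 2 ^ N"
        using power_increasing[of 3 N "2::real"] by simp
      then have "1 / 2 ^ N \<le> (1::real) / 8" by (intro divide_left_mono) auto
      then show ?thesis using beta(2)[folded N_def] by linarith
    qed auto
    have "P \<le> 1 + 8 * \<beta> * (2 ^ (N - 1) - 1)"
      unfolding P_def \<rho>_def by (rule pow_bound) (use beta c in auto)
    moreover have "8 * \<beta> * (2 ^ (N - 1) - 1) \<le> 8 * \<beta> * 2 ^ (N - 1)" using beta by simp
    moreover have "(2::real) ^ N = 2 * 2 ^ (N - 1)" using N2
      by (metis Suc_diff_1 less_le_trans pos2 power_Suc)
    moreover have "4 * 2 ^ N \<le> 18 * L" using L_big[OF N2] L_def by simp
    moreover have "\<beta> * (4 * 2 ^ N) \<le> \<beta> * (18 * L)"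
      using L_big[OF N2] L_def beta by (intro mult_left_mono) auto
    moreover have "8 * \<beta> * 2 ^ (N - 1) = \<beta> * (4 * (2 * 2 ^ (N - 1)))" by simp
    ultimately show ?thesis by (simp add: algebra_simps)
  qed
  have part2: "\<bar>1 - \<mu>h s / \<mu> s\<bar> \<le> 18 * \<beta> * L" if st: "stationary_dist qh \<mu>h" for \<mu>h s
  proof -
    define r where "r u = \<mu>h u / \<mu> u" for u
    have mhr: "\<mu>h u = r u * \<mu> u" for u using mpos[of u] r_def by simp
    have rnn: "0 \<le> r u" for u using st mpos[of u] unfolding r_def stationary_dist_def by simp
    have cut: "\<exists>u\<in>C. \<exists>t. t \<notin> C \<and> r u \<le> \<rho> * r t" if C: "C \<noteq> {}" "C \<noteq> UNIV" for C
    proof (rule ccontr)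
      assume "\<not> ?thesis"
      then have H: "\<And>u t. u \<in> C \<Longrightarrow> t \<notin> C \<Longrightarrow> \<rho> * r t < r u" by force
      define a where "a = Min (r ` C)"
      define b where "b = Max (r ` (UNIV - C))"
      have ain: "a \<in> r ` C" unfolding a_def using C by (intro Min_in) auto
      have bin: "b \<in> r ` (UNIV - C)" unfolding b_def using C by (intro Max_in) auto
      have ab: "\<rho> * b < a" using ain bin H by auto
      have ale: "\<And>u. u \<in> C \<Longrightarrow> a \<le> r u" unfolding a_def by simp
      have ble: "\<And>u. u \<notin> C \<Longrightarrow> r u \<le> b" unfolding b_def by simp
      have bnn: "0 \<le> b" using bin rnn by auto
      have "a * cutflow \<mu> qh C \<le> cutflow \<mu>h qh C"
      proof -
        have "a * cutflow \<mu> qh C = (\<Sum>u\<in>C. \<Sum>t\<in>UNIV-C. a * (\<mu> u * qh u t))"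
          unfolding cutflow_def by (simp add: sum_distrib_left)
        also have "\<dots> \<le> (\<Sum>u\<in>C. \<Sum>t\<in>UNIV-C. r u * (\<mu> u * qh u t))"
          using ale mpos qhnn by (intro sum_mono mult_right_mono) (auto simp: mult_nonneg_nonneg[OF less_imp_le[OF mpos] qhnn])
        also have "\<dots> = cutflow \<mu>h qh C" unfolding cutflow_def mhr by (simp add: mult.assoc)
        finally show ?thesis .
      qed
      moreover have "inflow \<mu>h qh C \<le> b * inflow \<mu> qh C"
      proof -
        have "inflow \<mu>h qh C = (\<Sum>u\<in>UNIV-C. \<Sum>t\<in>C. r u * (\<mu> u * qh u t))"
          unfolding inflow_def mhr by (simp add: mult.assoc)
        also have "\<dots> \<le> (\<Sum>u\<in>UNIV-C. \<Sum>t\<in>C. b * (\<mu> u * qh u t))"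
          using ble mpos qhnn by (intro sum_mono mult_right_mono) (auto simp: mult_nonneg_nonneg[OF less_imp_le[OF mpos] qhnn])
        also have "\<dots> = b * inflow \<mu> qh C"
          unfolding inflow_def by (simp add: sum_distrib_left)
        finally show ?thesis .
      qed
      moreover have "cutflow \<mu>h qh C = inflow \<mu>h qh C" by (rule balance[OF tm st])
      ultimately have main: "a * cutflow \<mu> qh C \<le> b * inflow \<mu> qh C" by linarith
      define F where "F = cutflow \<mu> q C"
      have FF: "inflow \<mu> q C = F" unfolding F_def using balance[OF _ mu] irr
        unfolding irreducible_def by simp
      have Fo: "(1 - \<beta>) * (F - \<delta> * z) \<le> cutflow \<mu> qh C" using Flo[of C] F_def by simp
      have Fi: "inflow \<mu> qh C \<le> (1 + \<beta>) * F + \<delta> * z" using Fhi[of C] FF by simp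
      have K: "(1 + \<beta>) * F + \<delta> * z \<le> \<rho> * ((1 - \<beta>) * (F - \<delta> * z))"
        unfolding \<rho>_def by (rule key) (use beta b14 dnn dle zpos Fz[OF C] F_def in auto)
      have Fop: "0 < cutflow \<mu> qh C" by (rule Fopos[OF C])
      show False
      proof (cases "b = 0")
        case True
        then have "0 < a" using ab by simp
        then have "0 < a * cutflow \<mu> qh C" using Fop by simp
        then show False using main True by simp
      next
        case False
        then have bp: "0 < b" using bnn by simp
        have "b * (\<rho> * cutflow \<mu> qh C) < a * cutflow \<mu> qh C"
          using ab Fop by (simp add: mult.assoc[symmetric] mult.commute[of b])
        then have "b * (\<rho> * cutflow \<mu> qh C) < b * inflow \<mu> qh C" using main by linarith
        then have "\<rho> * cutflow \<mu> qh C < inflow \<mu> qh C" using bp by simp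
        moreover have "\<rho> * ((1 - \<beta>) * (F - \<delta> * z)) \<le> \<rho> * cutflow \<mu> qh C"
          using Fo rho1 by (intro mult_left_mono) auto
        ultimately show False using K Fi by linarith
      qed
    qed
    have ch: "r x \<le> P * r y" for x y unfolding P_def N_def
      by (rule chain[OF rho1 rnn cut]) auto
    obtain t1 where t1: "r t1 \<le> 1"
    proof (rule ccontr)
      assume nt: "\<not> thesis"
      have "\<forall>t. 1 < r t"
      proof
        fix t show "1 < r t" using that[of t] nt by linarith
      qed
      then have "\<forall>t. \<mu> t < \<mu>h t"
        using mhr mpos mult_strict_right_mono[of 1 "r _" "\<mu> _"] by (metis mult_1)
      then have "(\<Sum>t\<in>UNIV. \<mu> t) < (\<Sum>t\<in>UNIV. \<mu>h t)" by (intro sum_strict_mono) auto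
      then show False using mu st unfolding stationary_dist_def by simp
    qed
    obtain t2 where t2: "1 \<le> r t2"
    proof (rule ccontr)
      assume nt: "\<not> thesis"
      have "\<forall>t. r t < 1"
      proof
        fix t show "r t < 1" using that[of t] nt by linarith
      qed
      then have "\<forall>t. \<mu>h t < \<mu> t"
        using mhr mpos mult_strict_right_mono[of "r _" 1 "\<mu> _"] by (metis mult_1)
      then have "(\<Sum>t\<in>UNIV. \<mu>h t) < (\<Sum>t\<in>UNIV. \<mu> t)" by (intro sum_strict_mono) auto
      then show False using mu st unfolding stationary_dist_def by simp
    qed
    have up: "r s \<le> P" 
    proof -
      have "P * r t1 \<le> P * 1" using t1 P1 by (intro mult_left_mono) auto
      then show ?thesis using ch[of s t1] by simp
    qed
    have lo: "1 \<le> P * r s" using ch[of t2 s] t2 by simp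
    have "1 - r s \<le> P - 1"
    proof (cases "1 \<le> r s")
      case True then show ?thesis using P1 by simp
    next
      case False
      then have "1 - r s \<le> P * (1 - r s)" using P1 mult_right_mono[of 1 P "1 - r s"] by simp
      moreover have "P * (1 - r s) = P - P * r s" by (simp add: algebra_simps)
      ultimately show ?thesis using lo by linarith
    qed
    then have "\<bar>1 - r s\<bar> \<le> P - 1" using up by simp
    then show ?thesis using Pb r_def by simp
  qed
  show ?thesis using irrh part2 unfolding L_def N_def by blast
qed

end
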